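(* Suppose that $Q=Q_V$ has an optimal Hardy-weight $W$ in $\Omega$. If $V_1\in\widehat M^q_{loc}(p;\Omega)$ satisfies $V_1\ge-\varepsilon W$ for some $\varepsilon<1$, then $W+V_1$ is an optimal Hardy-weight of $Q_{V+V_1}$ in $\Omega$.
   Context: Fix $n\ge2$, $1<p<\infty$, a domain $\Omega\subseteq\mathbb{R}^n$. Standing assumptions: $H:\Omega\times\mathbb{R}^n\to[0,\infty)$, for a.e. $x$ a norm in $\xi$, measurable in $x$, locally uniformly equivalent to $|\cdot|$ on each subdomain $\omega\Subset\Omega$, uniformly convex and differentiable on $\mathbb{R}^n\setminus\{0\}$ for a.e. $x$; $\mathcal{A}(x,\xi)=\nabla_\xi(H(x,\xi)^p/p)\in C^1$ in $\xi\neq0$ for all $x$, with, on each domain $\omega\Subset\Omega$, $D_\xi\mathcal{A}(x,\xi)\eta\cdot\eta\ge\Lambda_{1,\omega}|\xi|^{p-2}|\eta|^2$, $|D_\xi\mathcal{A}(x,\xi)|\le\Lambda_{2,\omega}|\xi|^{p-2}$, $|\mathcal{A}(x,\xi)-\mathcal{A}(y,\xi)|\le\Lambda_{3,\omega}|\xi|^{p-1}|x-y|^{\vartheta_\omega}$ ($0<\vartheta_\omega\le1$). $V\in\widehat M^q_{loc}(p;\Omega)$, where for domains $\omega\Subset\Omega$: if $p<n$, $q>n/p$, $M^q(p;\omega)$ is defined by $\sup_{y\in\omega,0<r<\mathrm{diam}\,\omega}r^{-n/q'}\int_{\omega\cap B_r(y)}|f|<\infty$; if $p=n$, $q>n$,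 by the same with $(\log(\mathrm{diam}\,\omega/r))^{q/n'}$ in place of $r^{-n/q'}$; if $p>n$, $M^q(p;\omega)=L^1(\omega)$; $M^q_{loc}(p;\Omega)=\bigcap_\omega M^q(p;\omega)$; $\widehat M^q_{loc}$ additionally requires $q>n$ when $p<n$ and, when $p\ge n$, $\sup_{y,r}r^{-(n-p+\theta)}\int_{B_r(y)\cap\omega}|f|<\infty$ for some $\theta\in(p-1,p)$ and all domains $\omega\Subset\Omega$. $Q_V[\phi]=\int_\Omega(H(x,\nabla\phi)^p+V|\phi|^p)$ on $C_c^\infty(\Omega)$. Hardy-weight: $g\in L^1_{loc}$ with $Q_V[\phi]\ge C\int|g||\phi|^p$; $Q_V$ critical if its only Hardy-weight is $0$. For $Q\ge0$, a null-sequence is a nonnegative sequence in $W^{1,p}(\Omega)\cap C_c(\Omega)$ with $\|\phi_k\|_{L^p(U)}=1$ ($U\Subset\Omega$ fixed open) and $Q[\phi_k]\to0$; a ground state is a positive $W^{1,p}_{loc}$ function which is the $L^p_{loc}$ limit of a null-sequence (unique up to constant when $Q$ is critical). An optimal Hardy-weight of $Q_V$ in $\Omega$ is a nonnegative $W\in\widehat M^q_{loc}(p;\Omega)$ with $Q_{V-W}$ critical in $\Omega$ and ground state $\psi$ of $Q_{V-W}$ satisfying $\int_\Omega W\psi^p=\infty$. *)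

theory Defs
  imports "HOL-Analysis.Analysis"
begin

definition domain :: "(real^'n) set \<Rightarrow> bool" where
  "domain \<Omega> \<longleftrightarrow> open \<Omega> \<and> connected \<Omega> \<and> \<Omega> \<noteq> {}"

definition subdomain :: "(real^'n) set \<Rightarrow> (real^'n) set \<Rightarrow> bool" where
  "subdomain \<omega> \<Omega> \<longleftrightarrow> domain \<omega> \<and> compact (closure \<omega>) \<and> closure \<omega> \<subseteq> \<Omega>"

definition loc_integrable :: "(real^'n) set \<Rightarrow> (real^'n \<Rightarrow> 'b::{banach,second_countable_topology}) \<Rightarrow> bool" where
  "loc_integrable \<Omega> f \<longleftrightarrow> (\<forall>K. compact K \<and> K \<subseteq> \<Omega> \<longrightarrow> integrable (lebesgue_on K) f)"

definition grad :: "(real^'n \<Rightarrow> real) \<Rightarrow> real^'n \<Rightarrow> real^'n" where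
  "grad f x = (\<chi> i. frechet_derivative f (at x) (axis i 1))"

coinductive smooth :: "(real^'n \<Rightarrow> real) \<Rightarrow> bool" where
  "(\<forall>x. f differentiable (at x)) \<Longrightarrow> (\<forall>i. smooth (\<lambda>x. grad f x $ i)) \<Longrightarrow> smooth f"

definition tsupp :: "(real^'n \<Rightarrow> real) \<Rightarrow> (real^'n) set" where
  "tsupp f = closure {x. f x \<noteq> 0}"

definition test_fun :: "(real^'n) set \<Rightarrow> (real^'n \<Rightarrow> real) \<Rightarrow> bool" where
  "test_fun \<Omega> \<phi> \<longleftrightarrow> smooth \<phi> \<and> compact (tsupp \<phi>) \<and> tsupp \<phi> \<subseteq> \<Omega>"

definition cc_fun :: "(real^'n) set \<Rightarrow> (real^'n \<Rightarrow> real) \<Rightarrow> bool" where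
  "cc_fun \<Omega> \<phi> \<longleftrightarrow> continuous_on UNIV \<phi> \<and> compact (tsupp \<phi>) \<and> tsupp \<phi> \<subseteq> \<Omega>"

definition weak_grad :: "(real^'n) set \<Rightarrow> (real^'n \<Rightarrow> real) \<Rightarrow> (real^'n \<Rightarrow> real^'n) \<Rightarrow> bool" where
  "weak_grad \<Omega> u G \<longleftrightarrow> loc_integrable \<Omega> u \<and> loc_integrable \<Omega> G \<and>
     (\<forall>\<phi> i. test_fun \<Omega> \<phi> \<longrightarrow>
        integral\<^sup>L (lebesgue_on \<Omega>) (\<lambda>x. u x * grad \<phi> x $ i)
          = - integral\<^sup>L (lebesgue_on \<Omega>) (\<lambda>x. G x $ i * \<phi> x))"

definition W1p :: "real \<Rightarrow> (real^'n) set \<Rightarrow> (real^'n \<Rightarrow> real) \<Rightarrow> (real^'n \<Rightarrow> real^'n) \<Rightarrow> bool" where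
  "W1p p \<Omega> u G \<longleftrightarrow> weak_grad \<Omega> u G \<and> u \<in> borel_measurable (lebesgue_on \<Omega>) \<and>
     integrable (lebesgue_on \<Omega>) (\<lambda>x. \<bar>u x\<bar> powr p) \<and>
     integrable (lebesgue_on \<Omega>) (\<lambda>x. norm (G x) powr p)"

definition W1p_loc :: "real \<Rightarrow> (real^'n) set \<Rightarrow> (real^'n \<Rightarrow> real) \<Rightarrow> (real^'n \<Rightarrow> real^'n) \<Rightarrow> bool" where
  "W1p_loc p \<Omega> u G \<longleftrightarrow> weak_grad \<Omega> u G \<and>
     loc_integrable \<Omega> (\<lambda>x. \<bar>u x\<bar> powr p) \<and> loc_integrable \<Omega> (\<lambda>x. norm (G x) powr p)"

definition standing_H ::
  "real \<Rightarrow> (real^'n) set \<Rightarrow> (real^'n \<Rightarrow> real^'n \<Rightarrow> real) \<Rightarrow> bool" where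
  "standing_H p \<Omega> H \<longleftrightarrow>
     (\<forall>x\<in>\<Omega>. \<forall>\<xi>. H x \<xi> \<ge> 0) \<and>
     \<comment> \<open>norm in xi for a.e. x\<close>
     (AE x in lebesgue. x \<in> \<Omega> \<longrightarrow>
        (\<forall>\<xi> \<eta>. H x (\<xi> + \<eta>) \<le> H x \<xi> + H x \<eta>) \<and>
        (\<forall>c \<xi>. H x (c *\<^sub>R \<xi>) = \<bar>c\<bar> * H x \<xi>) \<and>
        (\<forall>\<xi>. H x \<xi> = 0 \<longrightarrow> \<xi> = 0)) \<and>
     \<comment> \<open>measurable in x\<close>
     (\<forall>\<xi>. (\<lambda>x. H x \<xi>) \<in> borel_measurable (lebesgue_on \<Omega>)) \<and>
     \<comment> \<open>locally uniformly equivalent to the Euclidean norm\<close>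
     (\<forall>\<omega>. subdomain \<omega> \<Omega> \<longrightarrow> (\<exists>c C. 0 < c \<and> 0 < C \<and>
        (AE x in lebesgue. x \<in> \<omega> \<longrightarrow> (\<forall>\<xi>. c * norm \<xi> \<le> H x \<xi> \<and> H x \<xi> \<le> C * norm \<xi>)))) \<and>
     \<comment> \<open>uniformly convex and differentiable off the origin, for a.e. x\<close>
     (AE x in lebesgue. x \<in> \<Omega> \<longrightarrow>
        (\<forall>e>0. \<exists>d>0. \<forall>\<xi> \<eta>. H x \<xi> = 1 \<and> H x \<eta> = 1 \<and> H x (\<xi> - \<eta>) \<ge> e
            \<longrightarrow> H x ((1/2) *\<^sub>R (\<xi> + \<eta>)) \<le> 1 - d) \<and>
        (\<forall>\<xi>. \<xi> \<noteq> 0 \<longrightarrow> H x differentiable (at \<xi>))) \<and>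
     \<comment> \<open>the vector field A = grad_xi (H^p/p), its derivative DA, and their bounds\<close>
     (\<exists>A :: real^'n \<Rightarrow> real^'n \<Rightarrow> real^'n. \<exists>DA :: real^'n \<Rightarrow> real^'n \<Rightarrow> real^'n^'n.
        (\<forall>x\<in>\<Omega>. \<forall>\<xi>. \<xi> \<noteq> 0 \<longrightarrow>
            ((\<lambda>\<zeta>. H x \<zeta> powr p / p) has_derivative (\<lambda>\<eta>. A x \<xi> \<bullet> \<eta>)) (at \<xi>)) \<and>
        (\<forall>x\<in>\<Omega>. (\<forall>\<xi>. \<xi> \<noteq> 0 \<longrightarrow> (A x has_derivative (\<lambda>\<eta>. DA x \<xi> *v \<eta>)) (at \<xi>)) \<and>
                 continuous_on (UNIV - {0}) (DA x)) \<and>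
        (\<forall>\<omega>. subdomain \<omega> \<Omega> \<longrightarrow> (\<exists>\<Lambda>1 \<Lambda>2 \<Lambda>3 th. 0 < \<Lambda>1 \<and> 0 < \<Lambda>2 \<and> 0 < \<Lambda>3 \<and>
            0 < th \<and> th \<le> 1 \<and>
            (\<forall>x\<in>\<omega>. \<forall>\<xi> \<eta>. \<xi> \<noteq> 0 \<longrightarrow>
                (DA x \<xi> *v \<eta>) \<bullet> \<eta> \<ge> \<Lambda>1 * norm \<xi> powr (p - 2) * (norm \<eta>)\<^sup>2 \<and>
                norm (DA x \<xi>) \<le> \<Lambda>2 * norm \<xi> powr (p - 2)) \<and>
            (\<forall>x\<in>\<omega>. \<forall>y\<in>\<omega>. \<forall>\<xi>. \<xi> \<noteq> 0 \<longrightarrow>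
                norm (A x \<xi> - A y \<xi>) \<le> \<Lambda>3 * norm \<xi> powr (p - 1) * dist x y powr th))))"

definition ball_mass :: "(real^'n \<Rightarrow> real) \<Rightarrow> (real^'n) set \<Rightarrow> real^'n \<Rightarrow> real \<Rightarrow> ennreal" where
  "ball_mass f \<omega> y r = nn_integral (lebesgue_on (\<omega> \<inter> ball y r)) (\<lambda>x. ennreal \<bar>f x\<bar>)"

definition Mq :: "real \<Rightarrow> real \<Rightarrow> (real^'n) set \<Rightarrow> (real^'n \<Rightarrow> real) \<Rightarrow> bool" where
  "Mq p q \<omega> f \<longleftrightarrow> f \<in> borel_measurable (lebesgue_on \<omega>) \<and>
     (let n = real CARD('n); q' = q / (q - 1); n' = n / (n - 1) in
      if p < n then
        q > n / p \<and> (\<exists>C. \<forall>y\<in>\<omega>. \<forall>r. 0 < r \<and> r < diameter \<omega> \<longrightarrow>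
            ennreal (r powr (- (n / q'))) * ball_mass f \<omega> y r \<le> ennreal C)
      else if p = n then
        q > n \<and> (\<exists>C. \<forall>y\<in>\<omega>. \<forall>r. 0 < r \<and> r < diameter \<omega> \<longrightarrow>
            ennreal (ln (diameter \<omega> / r) powr (q / n')) * ball_mass f \<omega> y r \<le> ennreal C)
      else integrable (lebesgue_on \<omega>) f)"

definition Mq_loc :: "real \<Rightarrow> real \<Rightarrow> (real^'n) set \<Rightarrow> (real^'n \<Rightarrow> real) \<Rightarrow> bool" where
  "Mq_loc p q \<Omega> f \<longleftrightarrow> (\<forall>\<omega>. subdomain \<omega> \<Omega> \<longrightarrow> Mq p q \<omega> f)"

definition Mq_hat_loc :: "real \<Rightarrow> real \<Rightarrow> (real^'n) set \<Rightarrow> (real^'n \<Rightarrow> real) \<Rightarrow> bool" where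
  "Mq_hat_loc p q \<Omega> f \<longleftrightarrow> Mq_loc p q \<Omega> f \<and>
     (let n = real CARD('n) in
       (p < n \<longrightarrow> q > n) \<and>
       (p \<ge> n \<longrightarrow> (\<exists>\<theta>. p - 1 < \<theta> \<and> \<theta> < p \<and>
          (\<forall>\<omega>. subdomain \<omega> \<Omega> \<longrightarrow> (\<exists>C. \<forall>y\<in>\<omega>. \<forall>r. 0 < r \<and> r < diameter \<omega> \<longrightarrow>
             ennreal (r powr (- (n - p + \<theta>))) * ball_mass f \<omega> y r \<le> ennreal C)))))"

definition QV :: "(real^'n \<Rightarrow> real^'n \<Rightarrow> real) \<Rightarrow> real \<Rightarrow> (real^'n \<Rightarrow> real) \<Rightarrow> (real^'n) set
                   \<Rightarrow> (real^'n \<Rightarrow> real) \<Rightarrow> (real^'n \<Rightarrow> real^'n) \<Rightarrow> real" where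
  "QV H p V \<Omega> u G = integral\<^sup>L (lebesgue_on \<Omega>) (\<lambda>x. H x (G x) powr p + V x * \<bar>u x\<bar> powr p)"

definition hardy_weight :: "(real^'n \<Rightarrow> real^'n \<Rightarrow> real) \<Rightarrow> real \<Rightarrow> (real^'n \<Rightarrow> real) \<Rightarrow> (real^'n) set
                   \<Rightarrow> (real^'n \<Rightarrow> real) \<Rightarrow> bool" where
  "hardy_weight H p V \<Omega> g \<longleftrightarrow> loc_integrable \<Omega> g \<and>
     (\<exists>C>0. \<forall>\<phi>. test_fun \<Omega> \<phi> \<longrightarrow>
        QV H p V \<Omega> \<phi> (grad \<phi>) \<ge> C * integral\<^sup>L (lebesgue_on \<Omega>) (\<lambda>x. \<bar>g x\<bar> * \<bar>\<phi> x\<bar> powr p))"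

definition critical :: "(real^'n \<Rightarrow> real^'n \<Rightarrow> real) \<Rightarrow> real \<Rightarrow> (real^'n \<Rightarrow> real) \<Rightarrow> (real^'n) set \<Rightarrow> bool" where
  "critical H p V \<Omega> \<longleftrightarrow> hardy_weight H p V \<Omega> (\<lambda>x. 0) \<and>
     (\<forall>g. hardy_weight H p V \<Omega> g \<longrightarrow> (AE x in lebesgue_on \<Omega>. g x = 0))"

definition null_sequence :: "(real^'n \<Rightarrow> real^'n \<Rightarrow> real) \<Rightarrow> real \<Rightarrow> (real^'n \<Rightarrow> real) \<Rightarrow> (real^'n) set
                   \<Rightarrow> (real^'n) set \<Rightarrow> (nat \<Rightarrow> real^'n \<Rightarrow> real) \<Rightarrow> bool" where
  "null_sequence H p V \<Omega> U \<phi> \<longleftrightarrow>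
     (\<exists>G. (\<forall>k. W1p p \<Omega> (\<phi> k) (G k) \<and> cc_fun \<Omega> (\<phi> k) \<and> (\<forall>x. \<phi> k x \<ge> 0) \<and>
             integral\<^sup>L (lebesgue_on U) (\<lambda>x. \<bar>\<phi> k x\<bar> powr p) = 1) \<and>
          (\<lambda>k. QV H p V \<Omega> (\<phi> k) (G k)) \<longlonglongrightarrow> 0)"

definition ground_state :: "(real^'n \<Rightarrow> real^'n \<Rightarrow> real) \<Rightarrow> real \<Rightarrow> (real^'n \<Rightarrow> real) \<Rightarrow> (real^'n) set
                   \<Rightarrow> (real^'n \<Rightarrow> real) \<Rightarrow> bool" where
  "ground_state H p V \<Omega> \<psi> \<longleftrightarrow>
     (\<forall>x\<in>\<Omega>. \<psi> x > 0) \<and> (\<exists>G. W1p_loc p \<Omega> \<psi> G) \<and>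
     (\<exists>U \<phi>. open U \<and> compact (closure U) \<and> closure U \<subseteq> \<Omega> \<and>
        null_sequence H p V \<Omega> U \<phi> \<and>
        (\<forall>K. compact K \<and> K \<subseteq> \<Omega> \<longrightarrow>
           (\<lambda>k. integral\<^sup>L (lebesgue_on K) (\<lambda>x. \<bar>\<phi> k x - \<psi> x\<bar> powr p)) \<longlonglongrightarrow> 0))"

definition optimal_hardy_weight :: "(real^'n \<Rightarrow> real^'n \<Rightarrow> real) \<Rightarrow> real \<Rightarrow> real \<Rightarrow> (real^'n \<Rightarrow> real)
                   \<Rightarrow> (real^'n) set \<Rightarrow> (real^'n \<Rightarrow> real) \<Rightarrow> bool" where
  "optimal_hardy_weight H p q V \<Omega> W \<longleftrightarrow>
     (\<forall>x\<in>\<Omega>. W x \<ge> 0) \<and> Mq_hat_loc p q \<Omega> W \<and>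
     critical H p (\<lambda>x. V x - W x) \<Omega> \<and>
     (\<exists>\<psi>. ground_state H p (\<lambda>x. V x - W x) \<Omega> \<psi> \<and>
        nn_integral (lebesgue_on \<Omega>) (\<lambda>x. ennreal (W x * \<psi> x powr p)) = \<infinity>)"

end

theory Submission
  imports Defs
begin

lemma bm_add:
  assumes f: "f \<in> borel_measurable (lebesgue_on \<omega>)" and g: "g \<in> borel_measurable (lebesgue_on \<omega>)"
  shows "ball_mass (\<lambda>x. f x + g x) \<omega> y r \<le> ball_mass f \<omega> y r + ball_mass g \<omega> y r"
proof -
  have f': "f \<in> borel_measurable (lebesgue_on (\<omega> \<inter> ball y r))"
    using measurable_restrict_mono[OF f] by blast
  have g': "g \<in> borel_measurable (lebesgue_on (\<omega> \<inter> ball y r))"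
    using measurable_restrict_mono[OF g] by blast
  have "nn_integral (lebesgue_on (\<omega> \<inter> ball y r)) (\<lambda>x. ennreal \<bar>f x + g x\<bar>)
      \<le> nn_integral (lebesgue_on (\<omega> \<inter> ball y r)) (\<lambda>x. ennreal \<bar>f x\<bar> + ennreal \<bar>g x\<bar>)"
    by (intro nn_integral_mono) (simp add: ennreal_plus[symmetric] abs_triangle_ineq ennreal_leI del: ennreal_plus)
  also have "\<dots> = nn_integral (lebesgue_on (\<omega> \<inter> ball y r)) (\<lambda>x. ennreal \<bar>f x\<bar>)
      + nn_integral (lebesgue_on (\<omega> \<inter> ball y r)) (\<lambda>x. ennreal \<bar>g x\<bar>)"
    using f' g' by (intro nn_integral_add) auto
  finally show ?thesis unfolding ball_mass_def .
qed

lemma bound_add: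
  assumes f: "f \<in> borel_measurable (lebesgue_on \<omega>)" and g: "g \<in> borel_measurable (lebesgue_on \<omega>)"
    and hf: "\<forall>y\<in>\<omega>. \<forall>r. P r \<longrightarrow> ennreal (c r) * ball_mass f \<omega> y r \<le> ennreal C1"
    and hg: "\<forall>y\<in>\<omega>. \<forall>r. P r \<longrightarrow> ennreal (c r) * ball_mass g \<omega> y r \<le> ennreal C2"
  shows "\<exists>C. \<forall>y\<in>\<omega>. \<forall>r. P r \<longrightarrow> ennreal (c r) * ball_mass (\<lambda>x. f x + g x) \<omega> y r \<le> ennreal C"
proof (intro exI[of _ "max C1 0 + max C2 0"] ballI allI impI)
  fix y r assume y: "y \<in> \<omega>" and P: "P r"
  have "ennreal (c r) * ball_mass (\<lambda>x. f x + g x) \<omega> y r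
      \<le> ennreal (c r) * (ball_mass f \<omega> y r + ball_mass g \<omega> y r)"
    by (intro mult_left_mono bm_add f g) auto
  also have "\<dots> = ennreal (c r) * ball_mass f \<omega> y r + ennreal (c r) * ball_mass g \<omega> y r"
    by (simp add: distrib_left)
  also have "\<dots> \<le> ennreal C1 + ennreal C2"
    using hf hg y P by (intro add_mono) auto
  also have "\<dots> = ennreal (max C1 0 + max C2 0)"
    by (subst ennreal_plus) (auto simp: max_def ennreal_neg)
  finally show "ennreal (c r) * ball_mass (\<lambda>x. f x + g x) \<omega> y r \<le> ennreal (max C1 0 + max C2 0)" .
qed

lemma bound_add2:
  assumes f: "f \<in> borel_measurable (lebesgue_on \<omega>)" and g: "g \<in> borel_measurable (lebesgue_on \<omega>)"
    and hf: "\<forall>y\<in>\<omega>. \<forall>r>0. Q r \<longrightarrow> ennreal (c r) * ball_mass f \<omega> y r \<le> ennreal C1"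
    and hg: "\<forall>y\<in>\<omega>. \<forall>r>0. Q r \<longrightarrow> ennreal (c r) * ball_mass g \<omega> y r \<le> ennreal C2"
  shows "\<exists>C. \<forall>y\<in>\<omega>. \<forall>r>0. Q r \<longrightarrow> ennreal (c r) * ball_mass (\<lambda>x. f x + g x) \<omega> y r \<le> ennreal C"
proof -
  obtain C where "\<forall>y\<in>\<omega>. \<forall>r. 0 < r \<and> Q r \<longrightarrow> ennreal (c r) * ball_mass (\<lambda>x. f x + g x) \<omega> y r \<le> ennreal C"
    using bound_add[OF f g, of "\<lambda>r. 0 < r \<and> Q r" c C1 C2] hf hg by auto
  then show ?thesis by blast
qed

lemma Mq_add:
  assumes "Mq p q \<omega> f" "Mq p q \<omega> g"
  shows "Mq p q \<omega> (\<lambda>x. f x + g x)"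
proof -
  have f: "f \<in> borel_measurable (lebesgue_on \<omega>)" and g: "g \<in> borel_measurable (lebesgue_on \<omega>)"
    using assms unfolding Mq_def by auto
  show ?thesis
    using assms f g unfolding Mq_def Let_def
    apply (simp only: if_split_asm split: if_split)
    apply (intro conjI impI; (elim conjE exE)?)
    by (auto intro!: bound_add2[OF f g] borel_measurable_add)
qed

lemma theta_shift:
  assumes th: "th \<le> thi"
    and h: "\<forall>y\<in>\<omega>. \<forall>r. 0 < r \<and> r < diameter \<omega> \<longrightarrow>
             ennreal (r powr (- (n - p + thi))) * ball_mass f \<omega> y r \<le> ennreal C"
  shows "\<exists>C'. \<forall>y\<in>\<omega>. \<forall>r. 0 < r \<and> r < diameter \<omega> \<longrightarrow>
             ennreal (r powr (- (n - p + th))) * ball_mass f \<omega> y r \<le> ennreal C'"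
proof (intro exI[of _ "diameter \<omega> powr (thi - th) * max C 0"] ballI allI impI)
  fix y r assume y: "y \<in> \<omega>" and r: "0 < r \<and> r < diameter \<omega>"
  let ?D = "diameter \<omega> powr (thi - th)"
  have "r powr (- (n - p + th)) = r powr (- (n - p + thi)) * r powr (thi - th)"
    by (subst powr_add[symmetric]) (simp add: algebra_simps)
  also have "\<dots> \<le> r powr (- (n - p + thi)) * ?D"
    using r th by (intro mult_left_mono powr_mono2) auto
  finally have le: "r powr (- (n - p + th)) \<le> ?D * r powr (- (n - p + thi))" by (simp add: mult.commute)
  have "ennreal (r powr (- (n - p + th))) * ball_mass f \<omega> y r
      \<le> ennreal (?D * r powr (- (n - p + thi))) * ball_mass f \<omega> y r"
    by (intro mult_right_mono ennreal_leI le) auto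
  also have "\<dots> = ennreal ?D * (ennreal (r powr (- (n - p + thi))) * ball_mass f \<omega> y r)"
    by (simp add: ennreal_mult mult.assoc)
  also have "\<dots> \<le> ennreal ?D * ennreal C"
    using h y r by (intro mult_left_mono) auto
  also have "\<dots> \<le> ennreal ?D * ennreal (max C 0)"
    by (intro mult_left_mono ennreal_leI) auto
  also have "\<dots> = ennreal (?D * max C 0)"
    by (simp add: ennreal_mult)
  finally show "ennreal (r powr (- (n - p + th))) * ball_mass f \<omega> y r \<le> ennreal (?D * max C 0)" .
qed

lemma nn_integral_cmult_le:
  fixes c :: ennreal
  shows "c * integral\<^sup>N M f \<le> (\<integral>\<^sup>+ x. c * f x \<partial>M)"
proof -
  have "c * integral\<^sup>N M f = (SUP g \<in> {g. simple_function M g \<and> g \<le> f}. c * integral\<^sup>S M g)"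
    unfolding nn_integral_def by (simp add: SUP_mult_left_ennreal)
  also have "\<dots> \<le> (\<integral>\<^sup>+ x. c * f x \<partial>M)"
  proof (rule SUP_least)
    fix g assume g: "g \<in> {g. simple_function M g \<and> g \<le> f}"
    then have sg: "simple_function M g" and gf: "g \<le> f" by auto
    have "c * integral\<^sup>S M g = integral\<^sup>S M (\<lambda>x. c * g x)"
      using sg by simp
    also have "\<dots> \<le> (\<integral>\<^sup>+ x. c * f x \<partial>M)"
      unfolding nn_integral_def
    proof (rule SUP_upper)
      show "(\<lambda>x. c * g x) \<in> {h. simple_function M h \<and> h \<le> (\<lambda>x. c * f x)}"
        using sg gf by (auto simp: le_fun_def intro: mult_left_mono)
    qed
    finally show "c * integral\<^sup>S M g \<le> (\<integral>\<^sup>+ x. c * f x \<partial>M)" .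
  qed
  finally show ?thesis .
qed

theorem lemma3p11:
  fixes H :: "real^'n \<Rightarrow> real^'n \<Rightarrow> real"
    and V V1 W :: "real^'n \<Rightarrow> real"
    and \<Omega> :: "(real^'n) set"
    and p q \<epsilon> :: real
  assumes "CARD('n) \<ge> 2"
    and "1 < p"
    and "domain \<Omega>"
    and "standing_H p \<Omega> H"
    and "Mq_hat_loc p q \<Omega> V"
    and "optimal_hardy_weight H p q V \<Omega> W"
    and "Mq_hat_loc p q \<Omega> V1"
    and "\<epsilon> < 1"
    and "\<forall>x\<in>\<Omega>. V1 x \<ge> - \<epsilon> * W x"
  shows "optimal_hardy_weight H p q (\<lambda>x. V x + V1 x) \<Omega> (\<lambda>x. W x + V1 x)"
proof -
  note opt = assms(6)[unfolded optimal_hardy_weight_def]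
  have W0: "\<forall>x\<in>\<Omega>. W x \<ge> 0" and MW: "Mq_hat_loc p q \<Omega> W"
    and crit: "critical H p (\<lambda>x. V x - W x) \<Omega>" using opt by auto
  obtain \<psi> where gs: "ground_state H p (\<lambda>x. V x - W x) \<Omega> \<psi>"
    and inf: "nn_integral (lebesgue_on \<Omega>) (\<lambda>x. ennreal (W x * \<psi> x powr p)) = \<infinity>"
    using opt by auto
  have eqf: "(\<lambda>x. V x + V1 x - (W x + V1 x)) = (\<lambda>x. V x - W x)" by auto
  have lowb: "\<forall>x\<in>\<Omega>. (1 - \<epsilon>) * W x \<le> W x + V1 x"
    using assms(9) by (auto simp: algebra_simps)
  have nonneg: "\<forall>x\<in>\<Omega>. W x + V1 x \<ge> 0"
  proof
    fix x assume x: "x \<in> \<Omega>"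
    have "0 \<le> (1 - \<epsilon>) * W x" using W0 x assms(8) by auto
    moreover have "(1 - \<epsilon>) * W x \<le> W x + V1 x" using lowb x by blast
    ultimately show "W x + V1 x \<ge> 0" by linarith
  qed
  have Mloc: "Mq_loc p q \<Omega> (\<lambda>x. W x + V1 x)"
    using MW assms(7) unfolding Mq_hat_loc_def Mq_loc_def by (auto intro: Mq_add)
  have hat: "Mq_hat_loc p q \<Omega> (\<lambda>x. W x + V1 x)"
  proof -
    have A: "real CARD('n) > p \<longrightarrow> q > real CARD('n)" using MW unfolding Mq_hat_loc_def Let_def by auto
    have B: "p \<ge> real CARD('n) \<longrightarrow> (\<exists>\<theta>. p - 1 < \<theta> \<and> \<theta> < p \<and>
          (\<forall>\<omega>. subdomain \<omega> \<Omega> \<longrightarrow> (\<exists>C. \<forall>y\<in>\<omega>. \<forall>r. 0 < r \<and> r < diameter \<omega> \<longrightarrow>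
             ennreal (r powr (- (real CARD('n) - p + \<theta>))) * ball_mass (\<lambda>x. W x + V1 x) \<omega> y r \<le> ennreal C)))"
    proof
      assume pn: "p \<ge> real CARD('n)"
      obtain t1 where t1: "p - 1 < t1" "t1 < p" and
        h1: "\<forall>\<omega>. subdomain \<omega> \<Omega> \<longrightarrow> (\<exists>C. \<forall>y\<in>\<omega>. \<forall>r. 0 < r \<and> r < diameter \<omega> \<longrightarrow>
             ennreal (r powr (- (real CARD('n) - p + t1))) * ball_mass W \<omega> y r \<le> ennreal C)"
        using MW pn unfolding Mq_hat_loc_def Let_def by auto
      obtain t2 where t2: "p - 1 < t2" "t2 < p" and
        h2: "\<forall>\<omega>. subdomain \<omega> \<Omega> \<longrightarrow> (\<exists>C. \<forall>y\<in>\<omega>. \<forall>r. 0 < r \<and> r < diameter \<omega> \<longrightarrow>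
             ennreal (r powr (- (real CARD('n) - p + t2))) * ball_mass V1 \<omega> y r \<le> ennreal C)"
        using assms(7) pn unfolding Mq_hat_loc_def Let_def by auto
      have main: "\<forall>\<omega>. subdomain \<omega> \<Omega> \<longrightarrow> (\<exists>C. \<forall>y\<in>\<omega>. \<forall>r. 0 < r \<and> r < diameter \<omega> \<longrightarrow>
             ennreal (r powr (- (real CARD('n) - p + min t1 t2))) * ball_mass (\<lambda>x. W x + V1 x) \<omega> y r \<le> ennreal C)"
      proof (intro allI impI)
        fix \<omega> :: "(real^'n) set" assume sd: "subdomain \<omega> \<Omega>"
        have mW: "W \<in> borel_measurable (lebesgue_on \<omega>)" and mV: "V1 \<in> borel_measurable (lebesgue_on \<omega>)"
          using MW assms(7) sd unfolding Mq_hat_loc_def Mq_loc_def Mq_def by auto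
        obtain C1 where c1: "\<forall>y\<in>\<omega>. \<forall>r. 0 < r \<and> r < diameter \<omega> \<longrightarrow>
             ennreal (r powr (- (real CARD('n) - p + t1))) * ball_mass W \<omega> y r \<le> ennreal C1"
          using h1 sd by blast
        obtain C2 where c2: "\<forall>y\<in>\<omega>. \<forall>r. 0 < r \<and> r < diameter \<omega> \<longrightarrow>
             ennreal (r powr (- (real CARD('n) - p + t2))) * ball_mass V1 \<omega> y r \<le> ennreal C2"
          using h2 sd by blast
        obtain D1 where d1: "\<forall>y\<in>\<omega>. \<forall>r. 0 < r \<and> r < diameter \<omega> \<longrightarrow>
             ennreal (r powr (- (real CARD('n) - p + min t1 t2))) * ball_mass W \<omega> y r \<le> ennreal D1"
          using theta_shift[OF _ c1, of "min t1 t2"] by auto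
        obtain D2 where d2: "\<forall>y\<in>\<omega>. \<forall>r. 0 < r \<and> r < diameter \<omega> \<longrightarrow>
             ennreal (r powr (- (real CARD('n) - p + min t1 t2))) * ball_mass V1 \<omega> y r \<le> ennreal D2"
          using theta_shift[OF _ c2, of "min t1 t2"] by auto
        show "\<exists>C. \<forall>y\<in>\<omega>. \<forall>r. 0 < r \<and> r < diameter \<omega> \<longrightarrow>
             ennreal (r powr (- (real CARD('n) - p + min t1 t2))) * ball_mass (\<lambda>x. W x + V1 x) \<omega> y r \<le> ennreal C"
          using bound_add[OF mW mV, of "\<lambda>r. 0 < r \<and> r < diameter \<omega>", OF d1 d2] by simp
      qed
      have "p - 1 < min t1 t2" "min t1 t2 < p" using t1 t2 by auto
      with main show "\<exists>\<theta>. p - 1 < \<theta> \<and> \<theta> < p \<and>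
          (\<forall>\<omega>. subdomain \<omega> \<Omega> \<longrightarrow> (\<exists>C. \<forall>y\<in>\<omega>. \<forall>r. 0 < r \<and> r < diameter \<omega> \<longrightarrow>
             ennreal (r powr (- (real CARD('n) - p + \<theta>))) * ball_mass (\<lambda>x. W x + V1 x) \<omega> y r \<le> ennreal C))"
        by blast
    qed
    show ?thesis unfolding Mq_hat_loc_def Let_def using Mloc A B by auto
  qed
  have "nn_integral (lebesgue_on \<Omega>) (\<lambda>x. ennreal ((1 - \<epsilon>) * (W x * \<psi> x powr p)))
      \<le> nn_integral (lebesgue_on \<Omega>) (\<lambda>x. ennreal ((W x + V1 x) * \<psi> x powr p))"
  proof (rule nn_integral_mono)
    fix x assume "x \<in> space (lebesgue_on \<Omega>)"
    then have x: "x \<in> \<Omega>" by simp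
    have "(1 - \<epsilon>) * (W x * \<psi> x powr p) = ((1 - \<epsilon>) * W x) * \<psi> x powr p" by simp
    also have "\<dots> \<le> (W x + V1 x) * \<psi> x powr p"
      using lowb x by (intro mult_right_mono) auto
    finally show "ennreal ((1 - \<epsilon>) * (W x * \<psi> x powr p)) \<le> ennreal ((W x + V1 x) * \<psi> x powr p)"
      by (rule ennreal_leI)
  qed
  moreover have "nn_integral (lebesgue_on \<Omega>) (\<lambda>x. ennreal ((1 - \<epsilon>) * (W x * \<psi> x powr p))) = \<infinity>"
  proof -
    have "ennreal (1 - \<epsilon>) * nn_integral (lebesgue_on \<Omega>) (\<lambda>x. ennreal (W x * \<psi> x powr p))
        \<le> nn_integral (lebesgue_on \<Omega>) (\<lambda>x. ennreal (1 - \<epsilon>) * ennreal (W x * \<psi> x powr p))"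
      by (rule nn_integral_cmult_le)
    also have "\<dots> = nn_integral (lebesgue_on \<Omega>) (\<lambda>x. ennreal ((1 - \<epsilon>) * (W x * \<psi> x powr p)))"
      using assms(8) by (intro nn_integral_cong ennreal_mult'[symmetric]) simp
    finally have le: "ennreal (1 - \<epsilon>) * nn_integral (lebesgue_on \<Omega>) (\<lambda>x. ennreal (W x * \<psi> x powr p))
        \<le> nn_integral (lebesgue_on \<Omega>) (\<lambda>x. ennreal ((1 - \<epsilon>) * (W x * \<psi> x powr p)))" .
    have "ennreal (1 - \<epsilon>) * nn_integral (lebesgue_on \<Omega>) (\<lambda>x. ennreal (W x * \<psi> x powr p)) = \<infinity>"
      using inf assms(8) by (simp add: ennreal_mult_top)
    with le show ?thesis by (simp add: top_unique)
  qed
  ultimately have inf2: "nn_integral (lebesgue_on \<Omega>) (\<lambda>x. ennreal ((W x + V1 x) * \<psi> x powr p)) = \<infinity>"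
    by (simp add: top_unique)
  show ?thesis unfolding optimal_hardy_weight_def eqf
    using nonneg hat crit gs inf2 by blast
qed

end
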